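(* Let $D$ be a long knot diagram, possibly with null vertices, and let $a\neq b$ be two points on edges of $D$, away from crossings and null vertices. Let $D'$ be obtained from $D$ by inserting a new null vertex at a point of an edge different from $a$ and $b$. Then $\tilde g_{ab}$ computed in $D'$ equals $\tilde g_{ab}$ computed in $D$.
   Context: A long knot diagram is a planar diagram of a long oriented knot. It may contain null vertices: marked points on the knot (away from crossings) whose only role is to cut edges. Edges are the arcs obtained by cutting the knot at every crossing (on both strands) and at every null vertex; they are labelled by distinct labels, and for a label $\ell$ we write $\ell^+$ for the label of the next edge along the orientation. A crossing is $c=(s,i,j)$ with sign $s=\pm1$, incoming over-edge $i$ and incoming under-edge $j$ (outgoing over-edge $i^+$, outgoing under-edge $j^+$). A null vertex with incoming edge $j$ and outgoing edge $k$ is recorded by the pair $(j,k)$. Let $A=I+\sum_cA_c+\sum_{\mathrm{nv}}A_{\mathrm{nv}}$ (square matrix indexed by edge labels over $\mathbb{Z}[T^{\pm1}]$), where for a crossing $c=(s,i,j)$, $A_c$ is zero except for entry $-T^s$ at $(i,i^+)$, entry $T^s-1$ at $(i,j^+)$ and entry $-1$ at $(j,j^+)$; and for a null vertex $(j,k)$, $A_{\mathrm{nv}}$ is zero except for entry $-1$ at $(j,k)$. Let $G=(g_{\alpha\beta})=A^{-1}$ (over $\mathbb{Q}(T)$). For two distinct points $a,b$ on edges $\alpha,\beta$ (away from crossings and null vertices), define $\tilde g_{ab}=g_{\alpha\beta}$ if $\alpha\neq\beta$ or if $\alpha=\beta$ and $a$ precedes $b$ along the orientation of that edge, and $\tilde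 g_{ab}=g_{\alpha\beta}-1$ if $\alpha=\beta$ and $a$ comes after $b$. *)

theory Defs
  imports "HOL-Computational_Algebra.Polynomial" "HOL-Computational_Algebra.Fraction_Field"
    "Jordan_Normal_Form.Gauss_Jordan_Elimination"
begin

text \<open>
  The long knot is parametrised by the real line,
  oriented by increasing parameter.  The diagram is a pair (X, N):
  X is the set of crossings, each a triple (s, p, q) with sign s (1 or -1),
  p the parameter of the point where the knot passes over the crossing and
  q the parameter where it passes under it; N is the set of parameters of the
  null vertices.  The cut points are all these parameters; the edges are the
  open arcs between consecutive cut points, numbered 0, 1, 2, ... along the
  orientation, so that the label of the next edge is l+1.
\<close>

type_synonym diagram = "(int \<times> real \<times> real) set \<times> real set"

definition cuts :: "diagram \<Rightarrow> real set" where
  "cuts D = (\<Union>(s,p,q)\<in>fst D. {p, q}) \<union> snd D"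

definition long_knot_diagram :: "diagram \<Rightarrow> bool" where
  "long_knot_diagram D \<longleftrightarrow>
     finite (fst D) \<and> finite (snd D) \<and>
     (\<forall>(s,p,q)\<in>fst D. (s = 1 \<or> s = -1) \<and> p \<noteq> q \<and> p \<notin> snd D \<and> q \<notin> snd D) \<and>
     (\<forall>c\<in>fst D. \<forall>c'\<in>fst D. c \<noteq> c' \<longrightarrow>
        {fst (snd c), snd (snd c)} \<inter> {fst (snd c'), snd (snd c')} = {})"

text \<open>Label of the edge containing the parameter x (x not a cut point), resp.
  of the edge incoming to the cut point x.\<close>
definition edge :: "diagram \<Rightarrow> real \<Rightarrow> nat" where
  "edge D x = card {t \<in> cuts D. t < x}"

definition num_edges :: "diagram \<Rightarrow> nat" where
  "num_edges D = card (cuts D) + 1"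

type_synonym QT = "rat poly fract"

definition TT :: QT where "TT = Fract [:0, 1:] 1"

definition Tpow :: "int \<Rightarrow> QT" where
  "Tpow s = (if s = 1 then TT else inverse TT)"

definition crossing_entry :: "diagram \<Rightarrow> int \<times> real \<times> real \<Rightarrow> nat \<Rightarrow> nat \<Rightarrow> QT" where
  "crossing_entry D c r k =
     (let s = fst c; i = edge D (fst (snd c)); j = edge D (snd (snd c)) in
        (if r = i \<and> k = i + 1 then - Tpow s else 0)
      + (if r = i \<and> k = j + 1 then Tpow s - 1 else 0)
      + (if r = j \<and> k = j + 1 then -1 else 0))"

definition nv_entry :: "diagram \<Rightarrow> real \<Rightarrow> nat \<Rightarrow> nat \<Rightarrow> QT" where
  "nv_entry D v r k = (let j = edge D v in if r = j \<and> k = j + 1 then -1 else 0)"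

definition Amat :: "diagram \<Rightarrow> QT mat" where
  "Amat D = mat (num_edges D) (num_edges D) (\<lambda>(r,k).
      (if r = k then 1 else 0)
    + (\<Sum>c\<in>fst D. crossing_entry D c r k)
    + (\<Sum>v\<in>snd D. nv_entry D v r k))"

definition Gmat :: "diagram \<Rightarrow> QT mat" where
  "Gmat D = the (mat_inverse (Amat D))"

definition gtilde :: "diagram \<Rightarrow> real \<Rightarrow> real \<Rightarrow> QT" where
  "gtilde D a b =
     (let \<alpha> = edge D a; \<beta> = edge D b in
        if \<alpha> = \<beta> \<and> b < a then Gmat D $$ (\<alpha>, \<beta>) - 1 else Gmat D $$ (\<alpha>, \<beta>))"

end

theory Submission
  imports Defs "Jordan_Normal_Form.Determinant"
begin

interpretation my_tf: comm_ring_hom "to_fract :: rat poly \<Rightarrow> rat poly fract"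
  by (unfold_locales, auto)
interpretation my_ev: comm_ring_hom "\<lambda>p::rat poly. poly p 1"
  by (unfold_locales, auto)

definition XP :: "rat poly" where "XP = [:0,1:]"

definition TPp :: "int \<Rightarrow> rat poly" where
  "TPp s = (if s = 1 then XP * XP else 1)"

definition pce :: "diagram \<Rightarrow> int \<times> real \<times> real \<Rightarrow> nat \<Rightarrow> nat \<Rightarrow> rat poly" where
  "pce D c r k =
     (let s = fst c; i = edge D (fst (snd c)); j = edge D (snd (snd c)) in
        (if r = i \<and> k = i + 1 then - TPp s else 0)
      + (if r = i \<and> k = j + 1 then TPp s - XP else 0)
      + (if r = j \<and> k = j + 1 then -XP else 0))"

definition pnv :: "diagram \<Rightarrow> real \<Rightarrow> nat \<Rightarrow> nat \<Rightarrow> rat poly" where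
  "pnv D v r k = (let j = edge D v in if r = j \<and> k = j + 1 then -XP else 0)"

definition Pmat :: "diagram \<Rightarrow> rat poly mat" where
  "Pmat D = mat (num_edges D) (num_edges D) (\<lambda>(r,k).
      (if r = k then XP else 0)
    + (\<Sum>c\<in>fst D. pce D c r k)
    + (\<Sum>v\<in>snd D. pnv D v r k))"

lemma TT_nz: "TT \<noteq> 0"
  by (simp add: TT_def Zero_fract_def eq_fract)

lemma TT_tf: "to_fract XP = TT"
  by (simp add: TT_def to_fract_def XP_def)

lemma XP_ev: "poly XP 1 = 1" by (simp add: XP_def)

lemma TPp_tf: "to_fract (TPp s) = TT * Tpow s"
  using TT_nz by (auto simp: TPp_def Tpow_def TT_tf)

lemma pce_tf: "to_fract (pce D c r k) = TT * crossing_entry D c r k"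
  unfolding pce_def crossing_entry_def Let_def
  by (simp add: TPp_tf TT_tf algebra_simps)

lemma pnv_tf: "to_fract (pnv D v r k) = TT * nv_entry D v r k"
  unfolding pnv_def nv_entry_def Let_def
  by (simp add: TT_tf algebra_simps)

lemma Pmat_map: "map_mat to_fract (Pmat D) = TT \<cdot>\<^sub>m Amat D"
  by (rule eq_matI, auto simp: Pmat_def Amat_def my_tf.hom_sum pce_tf pnv_tf TT_tf
       sum_distrib_left algebra_simps)

lemma pce_ev: "k \<le> r \<Longrightarrow> poly (pce D c r k) 1 = 0"
  unfolding pce_def Let_def by (auto simp: TPp_def XP_ev)

lemma pnv_ev: "k \<le> r \<Longrightarrow> poly (pnv D v r k) 1 = 0"
  unfolding pnv_def Let_def by auto

lemma det_Pmat: "poly (det (Pmat D)) 1 = 1"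
proof -
  let ?M = "map_mat (\<lambda>p. poly p 1) (Pmat D)"
  have ut: "upper_triangular ?M"
    unfolding upper_triangular_def
    by (auto simp: Pmat_def poly_sum pce_ev pnv_ev XP_ev)
  have M: "?M \<in> carrier_mat (num_edges D) (num_edges D)" by (simp add: Pmat_def)
  have "det ?M = prod_list (diag_mat ?M)" by (rule det_upper_triangular[OF ut M])
  also have "\<dots> = 1" unfolding prod_list_diag_prod
    by (rule prod.neutral, auto simp: Pmat_def poly_sum pce_ev pnv_ev XP_ev)
  finally show ?thesis by simp
qed

lemma det_Amat: "det (Amat D) \<noteq> 0"
proof
  assume "det (Amat D) = 0"
  then have "det (TT \<cdot>\<^sub>m Amat D) = 0" by simp
  then have "to_fract (det (Pmat D)) = 0" by (simp only: Pmat_map[symmetric] my_tf.hom_det)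
  then have "det (Pmat D) = 0" by simp
  then show False using det_Pmat[of D] by simp
qed

lemma Amat_carrier: "Amat D \<in> carrier_mat (num_edges D) (num_edges D)"
  by (simp add: Amat_def)

lemma Gmat_inv: "Amat D * Gmat D = 1\<^sub>m (num_edges D) \<and> Gmat D * Amat D = 1\<^sub>m (num_edges D)
   \<and> Gmat D \<in> carrier_mat (num_edges D) (num_edges D)"
proof -
  have U: "Amat D \<in> Units (ring_mat TYPE(QT) (num_edges D) ())"
    by (rule det_non_zero_imp_unit[OF Amat_carrier det_Amat])
  have "mat_inverse (Amat D) \<noteq> None"
  proof
    assume "mat_inverse (Amat D) = None"
    then have "Amat D \<notin> Units (ring_mat TYPE(QT) (num_edges D) ())"
      by (rule mat_inverse(1)[OF Amat_carrier])
    with U show False by simp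
  qed
  then obtain B where B: "mat_inverse (Amat D) = Some B" by auto
  then show ?thesis using mat_inverse(2)[OF Amat_carrier B] by (simp add: Gmat_def)
qed

definition crow :: "diagram \<Rightarrow> (nat \<Rightarrow> QT) \<Rightarrow> int \<times> real \<times> real \<Rightarrow> nat \<Rightarrow> QT" where
  "crow D f c x = (let s = fst c; i = edge D (fst (snd c)); j = edge D (snd (snd c)) in
     (if x = i then - Tpow s * f (i+1) + (Tpow s - 1) * f (j+1) else 0)
   + (if x = j then - f (j+1) else 0))"

definition vrow :: "diagram \<Rightarrow> (nat \<Rightarrow> QT) \<Rightarrow> real \<Rightarrow> nat \<Rightarrow> QT" where
  "vrow D f v x = (if x = edge D v then - f (edge D v + 1) else 0)"

lemma sum_if_delta:
  "(\<Sum>z\<in>{0..<(n::nat)}. (if P \<and> z = m then a else 0) * (f z :: QT)) = (if P \<and> m < n then a * f m else 0)"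
proof -
  have "(\<Sum>z\<in>{0..<n}. (if P \<and> z = m then a else 0) * (f z :: QT))
      = (\<Sum>z\<in>{0..<n}. if z = m then (if P then a * f m else 0) else 0)"
    by (rule sum.cong) auto
  also have "\<dots> = (if P \<and> m < n then a * f m else 0)"
    by (subst sum.delta) auto
  finally show ?thesis .
qed

lemma crossing_row:
  assumes "edge D (fst (snd c)) + 1 < n" "edge D (snd (snd c)) + 1 < n"
  shows "(\<Sum>z\<in>{0..<n}. crossing_entry D c x z * f z) = crow D f c x"
proof -
  have "(\<Sum>z\<in>{0..<n}. crossing_entry D c x z * f z) =
     (\<Sum>z\<in>{0..<n}. (if x = edge D (fst (snd c)) \<and> z = edge D (fst (snd c)) + 1 then - Tpow (fst c) else 0) * f z)
   + (\<Sum>z\<in>{0..<n}. (if x = edge D (fst (snd c)) \<and> z = edge D (snd (snd c)) + 1 then Tpow (fst c) - 1 else 0) * f z)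
   + (\<Sum>z\<in>{0..<n}. (if x = edge D (snd (snd c)) \<and> z = edge D (snd (snd c)) + 1 then - 1 else 0) * f z)"
    unfolding crossing_entry_def Let_def sum.distrib[symmetric] by (rule sum.cong, auto simp: algebra_simps)
  also have "\<dots> = crow D f c x"
    unfolding sum_if_delta using assms by (simp add: crow_def Let_def)
  finally show ?thesis .
qed

lemma nv_row:
  assumes "edge D v + 1 < n"
  shows "(\<Sum>z\<in>{0..<n}. nv_entry D v x z * f z) = vrow D f v x"
proof -
  have "(\<Sum>z\<in>{0..<n}. nv_entry D v x z * f z) =
     (\<Sum>z\<in>{0..<n}. (if x = edge D v \<and> z = edge D v + 1 then - 1 else 0) * f z)"
    unfolding nv_entry_def Let_def by (rule sum.cong, auto)
  also have "\<dots> = vrow D f v x"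
    unfolding sum_if_delta using assms by (simp add: vrow_def)
  finally show ?thesis .
qed

lemma Amat_row:
  assumes x: "x < num_edges D"
    and rc: "\<And>c. c \<in> fst D \<Longrightarrow> edge D (fst (snd c)) + 1 < num_edges D \<and> edge D (snd (snd c)) + 1 < num_edges D"
    and rv: "\<And>v. v \<in> snd D \<Longrightarrow> edge D v + 1 < num_edges D"
  shows "(\<Sum>z\<in>{0..<num_edges D}. Amat D $$ (x,z) * f z)
       = f x + (\<Sum>c\<in>fst D. crow D f c x) + (\<Sum>v\<in>snd D. vrow D f v x)"
proof -
  let ?n = "num_edges D"
  have "(\<Sum>z\<in>{0..<?n}. Amat D $$ (x,z) * f z) =
     (\<Sum>z\<in>{0..<?n}. (if x = z then 1 else 0) * f z)
   + (\<Sum>z\<in>{0..<?n}. \<Sum>c\<in>fst D. crossing_entry D c x z * f z)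
   + (\<Sum>z\<in>{0..<?n}. \<Sum>v\<in>snd D. nv_entry D v x z * f z)"
    unfolding sum.distrib[symmetric]
    by (rule sum.cong, auto simp: Amat_def x algebra_simps sum_distrib_right sum_distrib_left)
  also have "(\<Sum>z\<in>{0..<?n}. \<Sum>c\<in>fst D. crossing_entry D c x z * f z) = (\<Sum>c\<in>fst D. crow D f c x)"
    by (subst sum.swap, rule sum.cong, auto intro!: crossing_row dest: rc)
  also have "(\<Sum>z\<in>{0..<?n}. \<Sum>v\<in>snd D. nv_entry D v x z * f z) = (\<Sum>v\<in>snd D. vrow D f v x)"
    by (subst sum.swap, rule sum.cong, auto intro!: nv_row dest: rv)
  also have "(\<Sum>z\<in>{0..<?n}. (if x = z then 1 else 0) * f z) = f x"
    using x by (simp add: if_distrib[of "\<lambda>u. u * f _"] cong: if_cong)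
  finally show ?thesis .
qed

lemma mult_row:
  assumes "B \<in> carrier_mat (num_edges D) m" "x < num_edges D" "y < m"
  shows "(Amat D * B) $$ (x,y) = (\<Sum>z\<in>{0..<num_edges D}. Amat D $$ (x,z) * B $$ (z,y))"
  using assms by (simp add: Amat_def scalar_prod_def)

lemma edge_mono: "finite (cuts D) \<Longrightarrow> x \<le> y \<Longrightarrow> edge D x \<le> edge D y"
  unfolding edge_def by (rule card_mono) auto

lemma edge_strict: "finite (cuts D) \<Longrightarrow> p \<in> cuts D \<Longrightarrow> p < y \<Longrightarrow> edge D p < edge D y"
  unfolding edge_def by (rule psubset_card_mono) auto

lemma edge_le_card: "finite (cuts D) \<Longrightarrow> edge D x \<le> card (cuts D)"
  unfolding edge_def by (rule card_mono) auto

lemma edge_lt_card: "finite (cuts D) \<Longrightarrow> p \<in> cuts D \<Longrightarrow> edge D p < card (cuts D)"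
  unfolding edge_def by (rule psubset_card_mono) auto

lemma edge_rng: "finite (cuts D) \<Longrightarrow> p \<in> cuts D \<Longrightarrow> edge D p + 1 < num_edges D"
  using edge_lt_card[of D p] by (simp add: num_edges_def)

lemma cross_cuts: "c \<in> fst D \<Longrightarrow> fst (snd c) \<in> cuts D \<and> snd (snd c) \<in> cuts D"
  by (cases c) (force simp: cuts_def)

lemma nv_cuts: "v \<in> snd D \<Longrightarrow> v \<in> cuts D"
  by (simp add: cuts_def)

lemma Amat_row':
  assumes "finite (cuts D)" "x < num_edges D"
  shows "(\<Sum>z\<in>{0..<num_edges D}. Amat D $$ (x,z) * f z)
       = f x + (\<Sum>c\<in>fst D. crow D f c x) + (\<Sum>v\<in>snd D. vrow D f v x)"
proof (rule Amat_row[OF assms(2)])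
  fix c assume "c \<in> fst D"
  from cross_cuts[OF this] show "edge D (fst (snd c)) + 1 < num_edges D \<and> edge D (snd (snd c)) + 1 < num_edges D"
    using edge_rng[OF assms(1)] by blast
next
  fix v assume "v \<in> snd D"
  from nv_cuts[OF this] show "edge D v + 1 < num_edges D" using edge_rng[OF assms(1)] by blast
qed

definition psi :: "nat \<Rightarrow> nat \<Rightarrow> nat" where "psi k l = (if l < k then l else l + 1)"
definition rho :: "nat \<Rightarrow> nat \<Rightarrow> nat" where "rho k x = (if x \<le> k then x else x - 1)"

lemma inj_psi: "inj (psi k)"
  by (rule injI) (auto simp: psi_def split: if_splits)

lemma psi_ne: "psi k l \<noteq> k" by (auto simp: psi_def)

lemma crow_transfer:
  assumes "edge D1 (fst (snd c)) = \<sigma> (edge D (fst (snd c)))"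
    "edge D1 (snd (snd c)) = \<sigma> (edge D (snd (snd c)))"
    "inj \<sigma>" "\<And>l. f' (\<sigma> l + 1) = g (l + 1)"
  shows "crow D1 f' c (\<sigma> r) = crow D g c r"
  using assms unfolding crow_def Let_def by (simp add: inj_eq)

lemma vrow_transfer:
  assumes "edge D1 v = \<sigma> (edge D v)" "inj \<sigma>" "\<And>l. f' (\<sigma> l + 1) = g (l + 1)"
  shows "vrow D1 f' v (\<sigma> r) = vrow D g v r"
  using assms unfolding vrow_def by (simp add: inj_eq)

lemma crow_zero:
  assumes "x \<noteq> edge D (fst (snd c))" "x \<noteq> edge D (snd (snd c))"
  shows "crow D f c x = 0"
  using assms unfolding crow_def Let_def by simp

lemma vrow_zero: "x \<noteq> edge D v \<Longrightarrow> vrow D f v x = 0"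
  unfolding vrow_def by simp

context
  fixes X :: "(int \<times> real \<times> real) set" and N :: "real set" and t :: real
  assumes lkd: "long_knot_diagram (X, N)" and tnc: "t \<notin> cuts (X, N)"
begin

lemma finX: "finite X" and finN: "finite N"
  using lkd by (auto simp: long_knot_diagram_def)

lemma fin0: "finite (cuts (X, N))"
  using finX finN by (auto simp: cuts_def)

lemma cuts1: "cuts (X, insert t N) = insert t (cuts (X, N))"
  by (auto simp: cuts_def)

lemma fin1: "finite (cuts (X, insert t N))"
  using fin0 by (simp add: cuts1)

lemma num1: "num_edges (X, insert t N) = num_edges (X, N) + 1"
  using fin0 tnc by (simp add: num_edges_def cuts1)

lemma edge1: "x \<noteq> t \<Longrightarrow> edge (X, insert t N) x = edge (X, N) x + (if t < x then 1 else 0)"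
proof -
  assume "x \<noteq> t"
  let ?C = "cuts (X, N)"
  have fin: "finite {u \<in> ?C. u < x}" using fin0 by simp
  show ?thesis
  proof (cases "t < x")
    case True
    then have "{u \<in> insert t ?C. u < x} = insert t {u \<in> ?C. u < x}" by auto
    then show ?thesis using True fin tnc by (simp add: edge_def cuts1)
  next
    case False
    then have "{u \<in> insert t ?C. u < x} = {u \<in> ?C. u < x}" by auto
    then show ?thesis using False by (simp add: edge_def cuts1)
  qed
qed

lemma edge1_t: "edge (X, insert t N) t = edge (X, N) t"
proof -
  have "{u \<in> insert t (cuts (X, N)). u < t} = {u \<in> cuts (X, N). u < t}" by auto
  then show ?thesis by (simp add: edge_def cuts1)
qed

lemma edge1_cut: "p \<in> cuts (X, N) \<Longrightarrow> edge (X, insert t N) p = psi (edge (X, N) t) (edge (X, N) p)"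
proof -
  assume p: "p \<in> cuts (X, N)"
  then have "p \<noteq> t" using tnc by auto
  then consider "t < p" | "p < t" by linarith
  then show ?thesis
  proof cases
    case 1
    then show ?thesis using edge_mono[OF fin0, of t p] edge1[OF \<open>p \<noteq> t\<close>] by (simp add: psi_def)
  next
    case 2
    then show ?thesis using edge_strict[OF fin0 p 2] edge1[OF \<open>p \<noteq> t\<close>] by (simp add: psi_def)
  qed
qed

lemma k_lt: "edge (X, N) t < num_edges (X, N)"
  using edge_le_card[OF fin0, of t] by (simp add: num_edges_def)

end

definition Cmat :: "(int \<times> real \<times> real) set \<Rightarrow> real set \<Rightarrow> real \<Rightarrow> QT mat" where
  "Cmat X N t = mat (num_edges (X, N) + 1) (num_edges (X, N) + 1) (\<lambda>(x,y).
     Gmat (X, N) $$ (rho (edge (X, N) t) x, rho (edge (X, N) t) y)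
     - (if x = edge (X, N) t + 1 \<and> y = edge (X, N) t then 1 else 0))"

context
  fixes X :: "(int \<times> real \<times> real) set" and N :: "real set" and t :: real
  assumes lkd: "long_knot_diagram (X, N)" and tnc: "t \<notin> cuts (X, N)"
begin

lemma AC: "Amat (X, insert t N) * (Cmat X N t) = 1\<^sub>m (num_edges (X, N) + 1)"
proof (rule eq_matI)
  let ?D0 = "(X, N)" and ?D1 = "(X, insert t N)"
  let ?n = "num_edges ?D0" and ?k = "edge ?D0 t" and ?G = "Gmat ?D0"
  note fin0 = fin0[OF lkd tnc] and fin1 = fin1[OF lkd tnc] and num1 = num1[OF lkd tnc]
  note edge1_cut = edge1_cut[OF lkd tnc] and k_lt = k_lt[OF lkd tnc]
  have finN: "finite N" using finN[OF lkd tnc] .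
  have tN: "t \<notin> N" using tnc by (simp add: cuts_def)
  show "dim_row (Amat ?D1 * (Cmat X N t)) = dim_row (1\<^sub>m (?n + 1))" by (simp add: Amat_def num1)
  show "dim_col (Amat ?D1 * (Cmat X N t)) = dim_col (1\<^sub>m (?n + 1))" by (simp add: Cmat_def)
  fix x y assume "x < dim_row (1\<^sub>m (?n + 1))" "y < dim_col (1\<^sub>m (?n + 1))"
  then have x: "x < ?n + 1" and y: "y < ?n + 1" by auto
  define f' where "f' = (\<lambda>z. ?G $$ (rho ?k z, rho ?k y) - (if z = ?k + 1 \<and> y = ?k then 1 else 0))"
  define g where "g = (\<lambda>z. ?G $$ (z, rho ?k y))"
  have Cm_car: "(Cmat X N t) \<in> carrier_mat (num_edges ?D1) (?n + 1)" by (simp add: Cmat_def num1)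
  have "(Amat ?D1 * (Cmat X N t)) $$ (x,y) = (\<Sum>z\<in>{0..<num_edges ?D1}. Amat ?D1 $$ (x,z) * (Cmat X N t) $$ (z,y))"
    by (rule mult_row[OF Cm_car]) (use x y num1 in auto)
  also have "\<dots> = (\<Sum>z\<in>{0..<num_edges ?D1}. Amat ?D1 $$ (x,z) * f' z)"
    by (rule sum.cong) (use y num1 in \<open>auto simp: Cmat_def f'_def\<close>)
  also have "\<dots> = f' x + (\<Sum>c\<in>X. crow ?D1 f' c x) + (\<Sum>v\<in>insert t N. vrow ?D1 f' v x)"
    using Amat_row'[OF fin1, of x f'] x num1 by simp
  also have "(\<Sum>v\<in>insert t N. vrow ?D1 f' v x) = vrow ?D1 f' t x + (\<Sum>v\<in>N. vrow ?D1 f' v x)"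
    using finN tN by simp
  finally have eq: "(Amat ?D1 * (Cmat X N t)) $$ (x,y) = f' x + (\<Sum>c\<in>X. crow ?D1 f' c x) + vrow ?D1 f' t x + (\<Sum>v\<in>N. vrow ?D1 f' v x)"
    by (simp add: algebra_simps)
  have e1c: "\<And>c. c \<in> X \<Longrightarrow> edge ?D1 (fst (snd c)) = psi ?k (edge ?D0 (fst (snd c))) \<and>
       edge ?D1 (snd (snd c)) = psi ?k (edge ?D0 (snd (snd c)))"
    using cross_cuts[of _ ?D0] edge1_cut by simp
  have e1v: "\<And>v. v \<in> N \<Longrightarrow> edge ?D1 v = psi ?k (edge ?D0 v)"
    using nv_cuts[of _ ?D0] edge1_cut by simp
  have e1t: "edge ?D1 t = ?k" by (rule edge1_t[OF lkd tnc])
  show "(Amat ?D1 * (Cmat X N t)) $$ (x,y) = 1\<^sub>m (?n + 1) $$ (x,y)"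
  proof (cases "x = ?k")
    case True
    have "(\<Sum>c\<in>X. crow ?D1 f' c x) = 0"
    proof (rule sum.neutral, rule ballI)
      fix c assume c: "c \<in> X"
      show "crow ?D1 f' c x = 0"
        by (rule crow_zero) (simp_all only: e1c[OF c] True psi_ne[symmetric] not_False_eq_True)
    qed
    moreover have "(\<Sum>v\<in>N. vrow ?D1 f' v x) = 0"
    proof (rule sum.neutral, rule ballI)
      fix v assume v: "v \<in> N"
      show "vrow ?D1 f' v x = 0"
        by (rule vrow_zero) (simp_all only: e1v[OF v] True psi_ne[symmetric] not_False_eq_True)
    qed
    moreover have "vrow ?D1 f' t x = - f' (?k + 1)" by (simp add: vrow_def e1t True)
    ultimately show ?thesis using eq True x y by (simp add: f'_def rho_def)
  next
    case False
    define r where "r = rho ?k x"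
    have xr: "x = psi ?k r" and r: "r < ?n" using False x k_lt unfolding r_def rho_def psi_def by auto
    have fg: "\<And>l. f' (psi ?k l + 1) = g (l + 1)"
      by (auto simp: f'_def g_def psi_def rho_def)
    have fgS: "\<And>l. f' (Suc (psi ?k l)) = g (Suc l)" using fg by simp
    have h1: "(\<Sum>c\<in>X. crow ?D1 f' c x) = (\<Sum>c\<in>X. crow ?D0 g c r)"
      unfolding xr by (rule sum.cong, simp, rule crow_transfer[where \<sigma>="psi ?k"], simp_all add: e1c inj_psi fgS)
    have h2: "(\<Sum>v\<in>N. vrow ?D1 f' v x) = (\<Sum>v\<in>N. vrow ?D0 g v r)"
      unfolding xr by (rule sum.cong, simp, rule vrow_transfer[where \<sigma>="psi ?k"], simp_all add: e1v inj_psi fgS)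
    have h3: "vrow ?D1 f' t x = 0" using False by (simp add: vrow_def e1t)
    have h4: "f' x = g r - (if r = ?k \<and> y = ?k then 1 else 0)"
      unfolding xr by (auto simp: f'_def g_def psi_def rho_def)
    have h5: "g r + (\<Sum>c\<in>X. crow ?D0 g c r) + (\<Sum>v\<in>N. vrow ?D0 g v r) = (if r = rho ?k y then 1 else 0)"
    proof -
      have ry: "rho ?k y < ?n" using y k_lt by (auto simp: rho_def)
      have inv: "Amat ?D0 * ?G = 1\<^sub>m ?n" and Gc: "?G \<in> carrier_mat ?n ?n" using Gmat_inv by auto
      have "(Amat ?D0 * ?G) $$ (r, rho ?k y) = (\<Sum>z\<in>{0..<?n}. Amat ?D0 $$ (r,z) * g z)"
        unfolding g_def by (rule mult_row[OF Gc r ry])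
      also have "\<dots> = g r + (\<Sum>c\<in>X. crow ?D0 g c r) + (\<Sum>v\<in>N. vrow ?D0 g v r)"
        using Amat_row'[OF fin0 r, of g] by simp
      finally show ?thesis using inv r ry by simp
    qed
    have "(Amat ?D1 * (Cmat X N t)) $$ (x,y) = (g r + (\<Sum>c\<in>X. crow ?D0 g c r) + (\<Sum>v\<in>N. vrow ?D0 g v r))
        - (if r = ?k \<and> y = ?k then 1 else 0)"
      unfolding eq h1 h2 h3 h4 by (simp add: algebra_simps)
    also have "\<dots> = (if r = rho ?k y then 1 else 0) - (if r = ?k \<and> y = ?k then 1 else 0)"
      unfolding h5 ..
    also have "\<dots> = (if psi ?k r = y then 1 else 0)"
      by (auto simp: rho_def psi_def)
    finally show ?thesis using x y xr by simp
  qed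
qed

lemma G1: "Gmat (X, insert t N) = (Cmat X N t)"
proof -
  let ?n = "num_edges (X, N)" and ?D1 = "(X, insert t N)"
  have inv: "Gmat ?D1 * Amat ?D1 = 1\<^sub>m (?n+1)" and Gc: "Gmat ?D1 \<in> carrier_mat (?n+1) (?n+1)"
    using Gmat_inv[of ?D1] num1[OF lkd tnc] by auto
  have Ac: "Amat ?D1 \<in> carrier_mat (?n+1) (?n+1)" using Amat_carrier[of ?D1] num1[OF lkd tnc] by simp
  have Cc: "(Cmat X N t) \<in> carrier_mat (?n+1) (?n+1)" by (simp add: Cmat_def)
  have "(Cmat X N t) = (Gmat ?D1 * Amat ?D1) * (Cmat X N t)" using inv Cc by simp
  also have "\<dots> = Gmat ?D1 * (Amat ?D1 * (Cmat X N t))" by (rule assoc_mult_mat[OF Gc Ac Cc])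
  also have "\<dots> = Gmat ?D1" using AC Gc by simp
  finally show ?thesis by simp
qed

end

lemma Cm_idx: "x < num_edges (X, N) + 1 \<Longrightarrow> y < num_edges (X, N) + 1 \<Longrightarrow> Cmat X N t $$ (x, y) =
     Gmat (X, N) $$ (rho (edge (X, N) t) x, rho (edge (X, N) t) y)
     - (if x = edge (X, N) t + 1 \<and> y = edge (X, N) t then 1 else 0)"
  unfolding Cmat_def by simp

theorem mainTheorem2:
  fixes X :: "(int \<times> real \<times> real) set" and N :: "real set" and a b t :: real
  assumes "long_knot_diagram (X, N)"
    and "a \<notin> cuts (X, N)" and "b \<notin> cuts (X, N)" and "a \<noteq> b"
    and "t \<notin> cuts (X, N)" and "t \<noteq> a" and "t \<noteq> b"
  shows "gtilde (X, insert t N) a b = gtilde (X, N) a b"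
proof -
  note lkd = assms(1) and tnc = assms(5)
  have fin0: "finite (cuts (X, N))" by (rule fin0[OF lkd tnc])
  let ?k = "edge (X, N) t" and ?n = "num_edges (X, N)"
  have ea: "edge (X, insert t N) a = edge (X, N) a + (if t < a then 1 else 0)"
    using edge1[OF lkd tnc] assms(6) by simp
  have eb: "edge (X, insert t N) b = edge (X, N) b + (if t < b then 1 else 0)"
    using edge1[OF lkd tnc] assms(7) by simp
  have la: "edge (X, N) a < ?n" "edge (X, N) b < ?n"
    using edge_le_card[OF fin0] by (auto simp: num_edges_def less_Suc_eq_le)
  have ma: "t < a \<Longrightarrow> ?k \<le> edge (X, N) a" "a < t \<Longrightarrow> edge (X, N) a \<le> ?k"
    using edge_mono[OF fin0] by auto
  have mb: "t < b \<Longrightarrow> ?k \<le> edge (X, N) b" "b < t \<Longrightarrow> edge (X, N) b \<le> ?k"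
    using edge_mono[OF fin0] by auto
  have ta: "t < a \<or> a < t" and tb: "t < b \<or> b < t" using assms(6,7) by linarith+
  show ?thesis
    unfolding gtilde_def Let_def G1[OF lkd tnc] ea eb
    using la ma mb ta tb
    by (auto simp: Cm_idx rho_def)
qed

end
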